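(* Let $0<\beta<1$ and $A>0$. For every $p>0$ and every nonnegative $w\in W^{1,1}[-p,p]$ with $w(-p)=w(p)=0$ and $\int_{-p}^p w\,dx=A$, setting $L=\int_{-p}^p\sqrt{1+w'^2}\,dx$, we have $$L-2\beta p\ \ge\ 2\sqrt{A\big(\arccos\beta-\beta\sqrt{1-\beta^2}\big)},$$ with equality if and only if $$p=p_0:=\sqrt{\frac{(1-\beta^2)A}{\arccos\beta-\beta\sqrt{1-\beta^2}}}\quad\text{and}\quad w(x)=\sqrt{R^2-x^2}-\beta R,\ \ R=\frac{p_0}{\sqrt{1-\beta^2}}=\sqrt{\frac{A}{\arccos\beta-\beta\sqrt{1-\beta^2}}}.$$
   Context: $W^{1,1}[-p,p]$ denotes the Sobolev space of integrable functions on $[-p,p]$ with integrable weak derivative (absolutely continuous functions). *)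

theory Defs
  imports "HOL-Analysis.Analysis"
begin

text \<open>Membership in W^{1,1}[-p,p] with (weak) derivative g: w is absolutely
continuous on [-p,p], i.e. w is the indefinite integral of an integrable g.
Such g is the weak derivative of w (unique up to null sets).\<close>
definition W11_with_deriv :: "(real \<Rightarrow> real) \<Rightarrow> (real \<Rightarrow> real) \<Rightarrow> real \<Rightarrow> bool" where
  "W11_with_deriv w g p \<longleftrightarrow>
     g absolutely_integrable_on {-p..p} \<and>
     (\<forall>x\<in>{-p..p}. w x = w (-p) + integral {-p..x} g)"

end

theory Submission
  imports Defs
begin


lemma sfl: "sigma_finite_measure (lebesgue :: real measure)"
proof
  show "\<exists>A::real set set. countable A \<and> A \<subseteq> sets lebesgue \<and> \<Union>A = space lebesgue \<and> (\<forall>a\<in>A. emeasure lebesgue a \<noteq> \<infinity>)"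
  proof (intro exI[of _ "range (\<lambda>n::nat. {- real n .. real n})"] conjI)
    show "(\<Union>n. {- real n..real n}) = space lebesgue"
    proof auto
      fix x :: real obtain n where "\<bar>x\<bar> < real n" using reals_Archimedean2 by blast
      then show "\<exists>n. - real n \<le> x \<and> x \<le> real n" by (intro exI[of _ n]) auto
    qed
  qed auto
qed

interpretation leb_pair: pair_sigma_finite "lebesgue :: real measure" "lebesgue :: real measure"
  by (simp add: pair_sigma_finite_def sfl)

lemma id_leb_lborel: "(\<lambda>x. x) \<in> (lebesgue :: real measure) \<rightarrow>\<^sub>M lborel"
  by (simp add: measurable_completion)

lemma le_meas: "(\<lambda>z::real\<times>real. if fst z \<le> snd z then 1 else (0::real)) \<in> borel_measurable (lebesgue \<Otimes>\<^sub>M lebesgue)"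
proof -
  have 1: "(\<lambda>z::real\<times>real. if fst z \<le> snd z then 1 else (0::real)) \<in> borel_measurable (lborel \<Otimes>\<^sub>M lborel)"
  proof -
    have "closed {z::real\<times>real. fst z \<le> snd z}"
      by (intro closed_Collect_le continuous_intros)
    then have "indicator {z::real\<times>real. fst z \<le> snd z} \<in> borel_measurable (borel :: (real\<times>real) measure)"
      by (intro borel_measurable_indicator) (simp add: borel_closed)
    moreover have "indicator {z::real\<times>real. fst z \<le> snd z} = (\<lambda>z::real\<times>real. if fst z \<le> snd z then 1 else (0::real))"
      by (auto simp: indicator_def fun_eq_iff)
    ultimately have 3: "(\<lambda>z::real\<times>real. if fst z \<le> snd z then 1 else (0::real)) \<in> borel_measurable borel"
      by metis
    show ?thesis unfolding lborel_prod measurable_lborel2 by (rule 3)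
  qed
  have 2: "(\<lambda>z::real\<times>real. (fst z, snd z)) \<in> (lebesgue \<Otimes>\<^sub>M lebesgue) \<rightarrow>\<^sub>M (lborel \<Otimes>\<^sub>M lborel)"
    by (intro measurable_Pair measurable_compose[OF measurable_fst id_leb_lborel] measurable_compose[OF measurable_snd id_leb_lborel])
  from measurable_compose[OF 2 1] show ?thesis by simp
qed

lemma id_leb_on[measurable]: "(\<lambda>x::real. x) \<in> borel_measurable (lebesgue_on S)"
  using id_leb_lborel by (simp add: measurable_restrict_space1)

lemma leb_int_conv:
  fixes f :: "real \<Rightarrow> real"
  assumes "f absolutely_integrable_on S"
  shows "(LINT x|lebesgue. indicator S x * f x) = integral S f"
  using set_lebesgue_integral_eq_integral(2)[OF assms] by (simp add: set_lebesgue_integral_def)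

lemma byparts:
  fixes w w' :: "real \<Rightarrow> real" and p :: real
  assumes ai: "w' absolutely_integrable_on {-p..p}" and p: "p > 0"
   and wi: "\<forall>x\<in>{-p..p}. w x = w (-p) + integral {-p..x} w'"
  shows "integral {-p..p} (\<lambda>x. x * w' x) = p * w p + p * w (-p) - integral {-p..p} w"
proof -
  define g where "g x = indicator {-p..p} x * w' x" for x
  have gi: "integrable lebesgue g" using ai unfolding g_def set_integrable_def by simp
  have gm[measurable]: "g \<in> borel_measurable lebesgue" using gi by (rule borel_measurable_integrable)
  have Sm[measurable]: "{-p..p} \<in> sets (lebesgue :: real measure)" by simp
  define F where "F x t = g x * (indicator {-p..p} t * (if x \<le> t then 1 else 0))" for x t :: real
  have ind1: "indicator {-p..p} t * (if x \<le> t then 1 else 0) = (indicator {x..p} t :: real)"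
    if "x \<in> {-p..p}" for x t :: real using that by (auto simp: indicator_def)
  have ind2: "indicator {-p..p} x * (if x \<le> t then 1 else 0) = (indicator {-p..t} x :: real)"
    if "t \<in> {-p..p}" for x t :: real using that by (auto simp: indicator_def)
  have const_int: "(LINT t|lebesgue. indicator {x..p} t) = p - x" if "x \<le> p" for x :: real
  proof -
    have "(\<lambda>_. 1::real) absolutely_integrable_on {x..p}"
      by (intro absolutely_integrable_continuous_real continuous_intros)
    from leb_int_conv[OF this] that show ?thesis by simp
  qed
  have w'i: "w' integrable_on {-p..p}" using ai by (rule set_lebesgue_integral_eq_integral(1))
  have wcont: "continuous_on {-p..p} w"
  proof -
    have "continuous_on {-p..p} (\<lambda>x. integral {-p..x} w')"
      by (rule indefinite_integral_continuous_1[OF w'i])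
    then have "continuous_on {-p..p} (\<lambda>x. w (-p) + integral {-p..x} w')"
      by (rule continuous_on_add[OF continuous_on_const])
    then show ?thesis by (rule continuous_on_eq) (metis wi)
  qed
  have wai: "(\<lambda>t. w t - w (-p)) absolutely_integrable_on {-p..p}"
    by (intro absolutely_integrable_continuous_real continuous_on_diff continuous_on_const wcont)
  have w'm: "w' \<in> borel_measurable (lebesgue_on {-p..p})"
    using ai by (rule absolutely_integrable_imp_borel_measurable) simp
  have absw'i: "(\<lambda>x. \<bar>w' x\<bar>) integrable_on {-p..p}"
    using ai unfolding absolutely_integrable_on_def by simp
  have w2ai: "(\<lambda>x. w' x * (p - x)) absolutely_integrable_on {-p..p}"
  proof (rule measurable_bounded_by_integrable_imp_absolutely_integrable)
    show "(\<lambda>x. w' x * (p - x)) \<in> borel_measurable (lebesgue_on {-p..p})"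
      using w'm by measurable
    show "(\<lambda>x. 2 * p * \<bar>w' x\<bar>) integrable_on {-p..p}"
      using integrable_on_cmult_left[OF absw'i, of "2*p"] by simp
    show "norm (w' x * (p - x)) \<le> 2 * p * \<bar>w' x\<bar>" if "x \<in> {-p..p}" for x
    proof -
      have "\<bar>p - x\<bar> \<le> 2*p" using that by auto
      then have "\<bar>w' x\<bar> * \<bar>p - x\<bar> \<le> \<bar>w' x\<bar> * (2*p)" by (rule mult_left_mono) simp
      then show ?thesis by (simp only: real_norm_def abs_mult abs_abs) (simp add: algebra_simps)
    qed
  qed auto
  have w2aabs: "(\<lambda>x. \<bar>w' x\<bar> * (p - x)) absolutely_integrable_on {-p..p}"
  proof (rule measurable_bounded_by_integrable_imp_absolutely_integrable)
    show "(\<lambda>x. \<bar>w' x\<bar> * (p - x)) \<in> borel_measurable (lebesgue_on {-p..p})"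
      using w'm by measurable
    show "(\<lambda>x. 2 * p * \<bar>w' x\<bar>) integrable_on {-p..p}"
      using integrable_on_cmult_left[OF absw'i, of "2*p"] by simp
    show "norm (\<bar>w' x\<bar> * (p - x)) \<le> 2 * p * \<bar>w' x\<bar>" if "x \<in> {-p..p}" for x
    proof -
      have "\<bar>p - x\<bar> \<le> 2*p" using that by auto
      then have "\<bar>w' x\<bar> * \<bar>p - x\<bar> \<le> \<bar>w' x\<bar> * (2*p)" by (rule mult_left_mono) simp
      then show ?thesis by (simp only: real_norm_def abs_mult abs_abs) (simp add: algebra_simps)
    qed
  qed auto
  have inner_t: "(LINT t|lebesgue. F x t) = indicator {-p..p} x * (w' x * (p - x))" for x
  proof (cases "x \<in> {-p..p}")
    case True
    have "(LINT t|lebesgue. F x t) = g x * (LINT t|lebesgue. indicator {x..p} t)"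
      unfolding F_def using ind1[OF True] by simp
    also have "\<dots> = indicator {-p..p} x * (w' x * (p - x))"
      using True const_int[of x] by (simp add: g_def)
    finally show ?thesis .
  qed (simp add: F_def g_def)
  have inner_tabs: "(LINT t|lebesgue. \<bar>F x t\<bar>) = indicator {-p..p} x * (\<bar>w' x\<bar> * (p - x))" for x
  proof (cases "x \<in> {-p..p}")
    case True
    have "(LINT t|lebesgue. \<bar>F x t\<bar>) = \<bar>g x\<bar> * (LINT t|lebesgue. indicator {x..p} t)"
      unfolding F_def using ind1[OF True] by (simp add: abs_mult)
    also have "\<dots> = indicator {-p..p} x * (\<bar>w' x\<bar> * (p - x))"
      using True const_int[of x] by (simp add: g_def)
    finally show ?thesis .
  qed (simp add: F_def g_def)
  have inner_x: "(LINT x|lebesgue. F x t) = indicator {-p..p} t * (w t - w (-p))" for t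
  proof (cases "t \<in> {-p..p}")
    case True
    have "(LINT x|lebesgue. F x t) = (LINT x|lebesgue. indicator {-p..t} x * w' x)"
      unfolding F_def g_def using ind2[OF True] True
      by (intro Bochner_Integration.integral_cong) (auto simp: indicator_def)
    also have "\<dots> = integral {-p..t} w'"
      using True by (intro leb_int_conv absolutely_integrable_on_subinterval[OF ai]) auto
    also have "\<dots> = indicator {-p..p} t * (w t - w (-p))"
      using True wi[rule_format, OF True] by simp
    finally show ?thesis .
  qed (simp add: F_def g_def)
  have Fmeas: "(\<lambda>(x, t). F x t) \<in> borel_measurable (lebesgue \<Otimes>\<^sub>M lebesgue)"
  proof -
    have "(\<lambda>z::real\<times>real. g (fst z) * (indicator {-p..p} (snd z) * (if fst z \<le> snd z then 1 else 0))) \<in> borel_measurable (lebesgue \<Otimes>\<^sub>M lebesgue)"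
      using le_meas by measurable
    then show ?thesis by (simp add: F_def split_beta')
  qed
  have Fint: "integrable (lebesgue \<Otimes>\<^sub>M lebesgue) (\<lambda>(x, t). F x t)"
  proof (rule leb_pair.Fubini_integrable[OF Fmeas])
    show "integrable lebesgue (\<lambda>x. LINT y|lebesgue. norm (case (x, y) of (x, t) \<Rightarrow> F x t))"
      using w2aabs by (simp add: inner_tabs set_integrable_def)
    show "AE x in lebesgue. integrable lebesgue (\<lambda>y. case (x, y) of (x, t) \<Rightarrow> F x t)"
    proof (rule AE_I2)
      fix x :: real
      show "integrable lebesgue (\<lambda>y. case (x, y) of (x, t) \<Rightarrow> F x t)"
      proof (cases "x \<in> {-p..p}")
        case True
        have "integrable lebesgue (\<lambda>t. g x * indicator {x..p} t)"
          using True by (intro integrable_mult_right integrable_real_indicator) (auto simp: emeasure_lborel_Icc)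
        then show ?thesis using ind1[OF True] by (simp add: F_def)
      qed (simp add: F_def g_def)
    qed
  qed
  have "(LINT t|lebesgue. (LINT x|lebesgue. F x t)) = (LINT x|lebesgue. (LINT t|lebesgue. F x t))"
    by (rule leb_pair.Fubini_integral[OF Fint])
  then have eq: "integral {-p..p} (\<lambda>t. w t - w (-p)) = integral {-p..p} (\<lambda>x. w' x * (p - x))"
    unfolding inner_x inner_t using leb_int_conv[OF wai] leb_int_conv[OF w2ai] by simp
  have wint: "w integrable_on {-p..p}" by (intro integrable_continuous_real wcont)
  have xw'i: "(\<lambda>x. x * w' x) integrable_on {-p..p}"
  proof -
    have "(\<lambda>x. p * w' x - w' x * (p - x)) integrable_on {-p..p}"
      using integrable_on_cmult_left[OF w'i, of p] w2ai set_lebesgue_integral_eq_integral(1) by (intro integrable_diff) auto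
    then show ?thesis by (simp add: algebra_simps)
  qed
  have "integral {-p..p} (\<lambda>x. w' x * (p - x)) = p * integral {-p..p} w' - integral {-p..p} (\<lambda>x. x * w' x)"
  proof -
    have "integral {-p..p} (\<lambda>x. w' x * (p - x)) = integral {-p..p} (\<lambda>x. p * w' x - x * w' x)"
      by (simp add: algebra_simps)
    also have "\<dots> = p * integral {-p..p} w' - integral {-p..p} (\<lambda>x. x * w' x)"
      using integral_diff[OF integrable_on_cmult_left[OF w'i, of p] xw'i] by simp
    finally show ?thesis .
  qed
  moreover have "integral {-p..p} (\<lambda>t. w t - w (-p)) = integral {-p..p} w - 2 * p * w (-p)"
    using integral_diff[OF wint integrable_const_ivl[of "w (-p)" "-p" p]] p by (simp add: content_real algebra_simps)
  moreover have "integral {-p..p} w' = w p - w (-p)" using wi[rule_format, of p] p by simp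
  ultimately show ?thesis using eq by (simp add: algebra_simps)
qed


lemma intervals_zero_ae:
  fixes h :: "real \<Rightarrow> real"
  assumes hi: "h integrable_on {a..b}" and z: "\<And>x. x \<in> {a..b} \<Longrightarrow> integral {a..x} h = 0"
  obtains N where "negligible N" "\<And>x. x \<in> {a..b} \<Longrightarrow> x \<notin> N \<Longrightarrow> h x = 0"
proof -
  define H where "H x = (if x \<in> {a..b} then h x else 0)" for x
  have HU: "H integrable_on UNIV" unfolding H_def using hi integrable_restrict_UNIV by blast
  have "H integrable_on cbox u v" for u v :: real
    using HU integrable_on_subcbox by blast
  then obtain N where N: "negligible N" and lim: "\<And>x e. \<lbrakk>x \<notin> N; 0 < e\<rbrakk> \<Longrightarrow>
               \<exists>d>0. \<forall>t. 0 < t \<and> t < d \<longrightarrow>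
                         norm(integral (cbox x (x + t *\<^sub>R One)) H /\<^sub>R t ^ DIM(real) - H x) < e"
    using integrable_ccontinuous_explicit[of H] by blast
  show thesis
  proof (rule that[of "insert b N"])
    show "negligible (insert b N)" using N by simp
    fix x assume x: "x \<in> {a..b}" "x \<notin> insert b N"
    then have xb: "x < b" by auto
    show "h x = 0"
    proof (rule ccontr)
      assume hx: "h x \<noteq> 0"
      obtain d where d: "d > 0" and dd: "\<forall>t. 0 < t \<and> t < d \<longrightarrow>
                         norm(integral (cbox x (x + t *\<^sub>R One)) H /\<^sub>R t ^ DIM(real) - H x) < \<bar>h x\<bar>"
        using lim[of x "\<bar>h x\<bar>"] x hx by auto
      define t where "t = min (d/2) (b - x)"
      have t: "0 < t" "t < d" "x + t \<le> b" using d xb by (auto simp: t_def)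
      have "integral {x..x+t} H = integral {x..x+t} h"
        using x t by (intro integral_cong) (auto simp: H_def)
      also have "\<dots> = integral {a..x+t} h - integral {a..x} h"
      proof -
        have "h integrable_on {a..x+t}" by (rule integrable_on_subinterval[OF hi]) (use x t in auto)
        then show ?thesis using Henstock_Kurzweil_Integration.integral_combine[where a=a and c=x and b="x+t" and f=h] x t by auto
      qed
      also have "\<dots> = 0" using z[of "x+t"] z[of x] x t by auto
      finally have "integral {x..x+t} H = 0" .
      moreover have "H x = h x" using x by (simp add: H_def)
      moreover have "\<bar>inverse t * integral {x..x+t} H - H x\<bar> < \<bar>h x\<bar>"
        using dd t(1,2) by (simp add: cbox_interval)
      ultimately show False by simp
    qed
  qed
qed

lemma nonneg_int0_partial:
  fixes f :: "real \<Rightarrow> real"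
  assumes fi: "f integrable_on {a..b}" and nn: "\<And>x. x\<in>{a..b} \<Longrightarrow> 0 \<le> f x"
    and z: "integral {a..b} f = 0" and x: "x \<in> {a..b}"
  shows "integral {a..x} f = 0"
proof -
  have i1: "f integrable_on {a..x}" "f integrable_on {x..b}"
    by (rule integrable_on_subinterval[OF fi], use x in auto)+
  have "0 \<le> integral {a..x} f" using i1 nn x by (intro integral_nonneg) auto
  moreover have "0 \<le> integral {x..b} f" using i1 nn x by (intro integral_nonneg) auto
  moreover have "integral {a..x} f + integral {x..b} f = integral {a..b} f"
    using Henstock_Kurzweil_Integration.integral_combine[where a=a and c=x and b=b and f=f] x fi by auto
  ultimately show ?thesis using z by linarith
qed


lemma cs_ident:
  fixes u v y :: real
  assumes "u\<^sup>2 + v\<^sup>2 = 1"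
  shows "(1 + y\<^sup>2) - (- u * y + v)\<^sup>2 = (u + y * v)\<^sup>2"
proof -
  have "(1 + y\<^sup>2) - (- u * y + v)\<^sup>2 = (1 + y\<^sup>2) * (u\<^sup>2 + v\<^sup>2) - (- u * y + v)\<^sup>2"
    using assms by simp
  also have "\<dots> = (u + y * v)\<^sup>2" by (simp add: power2_eq_square algebra_simps)
  finally show ?thesis .
qed

lemma pw_ineq:
  fixes u v y :: real
  assumes "u\<^sup>2 + v\<^sup>2 = 1"
  shows "- u * y + v \<le> sqrt (1 + y\<^sup>2)"
proof -
  have "(- u * y + v)\<^sup>2 \<le> 1 + y\<^sup>2"
    using cs_ident[OF assms, of y] zero_le_power2[of "u + y * v"] by linarith
  then show ?thesis by (simp add: real_le_rsqrt)
qed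

lemma pw_eq:
  fixes u v y :: real
  assumes "u\<^sup>2 + v\<^sup>2 = 1" "v > 0"
  shows "sqrt (1 + y\<^sup>2) = - u * y + v \<longleftrightarrow> y = - u / v"
proof
  assume h: "sqrt (1 + y\<^sup>2) = - u * y + v"
  have "(sqrt (1 + y\<^sup>2))\<^sup>2 = 1 + y\<^sup>2" by simp
  then have "1 + y\<^sup>2 = (- u * y + v)\<^sup>2" using h by simp
  then have "(u + y * v)\<^sup>2 = 0" using cs_ident[OF assms(1), of y] by linarith
  then have "u + y * v = 0" by simp
  then show "y = - u / v" using assms(2) by (simp add: field_simps)
next
  assume y: "y = - u / v"
  have e1: "1 + y\<^sup>2 = (u\<^sup>2 + v\<^sup>2) / v\<^sup>2" unfolding y using assms(2) by (simp add: field_simps power2_eq_square)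
  have e2: "- u * y + v = (u\<^sup>2 + v\<^sup>2) / v" unfolding y using assms(2) by (simp add: field_simps power2_eq_square)
  have "sqrt (1 + y\<^sup>2) = sqrt ((1/v)\<^sup>2)" using e1 assms(1) by (simp add: power_divide)
  also have "\<dots> = 1/v" using assms(2) by simp
  also have "\<dots> = - u * y + v" using e2 assms(1) by simp
  finally show "sqrt (1 + y\<^sup>2) = - u * y + v" .
qed

lemma sq_deriv:
  fixes a x :: real
  assumes pos: "0 < 1 - (a * x)\<^sup>2"
  shows "((\<lambda>x. sqrt (1 - (a * x)\<^sup>2)) has_real_derivative (- (a * a * x) / sqrt (1 - (a * x)\<^sup>2))) (at x)"
proof -
  have i: "((\<lambda>x. 1 - (a*x)\<^sup>2) has_real_derivative (- (2 * a * a * x))) (at x)"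
  proof -
    have "((\<lambda>x. 1 - (a*x) * (a*x)) has_real_derivative (0 - (a * (a*x) + a * (a*x)))) (at x)"
      by (intro DERIV_diff DERIV_const DERIV_mult DERIV_cmult_Id)
    then show ?thesis by (simp add: power2_eq_square algebra_simps)
  qed
  have sq: "(sqrt has_real_derivative inverse (sqrt (1 - (a*x)\<^sup>2)) / 2) (at (1 - (a*x)\<^sup>2))"
    by (rule DERIV_real_sqrt[OF pos])
  have "((\<lambda>x. sqrt (1 - (a*x)\<^sup>2)) has_real_derivative (inverse (sqrt (1 - (a*x)\<^sup>2)) / 2 * (- (2 * a * a * x)))) (at x)"
    by (rule DERIV_chain2[OF sq i])
  moreover have "inverse (sqrt (1 - (a*x)\<^sup>2)) / 2 * (- (2 * a * a * x)) = - (a * a * x) / sqrt (1 - (a * x)\<^sup>2)"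
    by (simp add: field_simps)
  ultimately show ?thesis by simp
qed

lemma Phi_deriv:
  fixes a x :: real
  assumes "a \<noteq> 0" "\<bar>a * x\<bar> < 1"
  shows "((\<lambda>x. sqrt (1 - (a * x)\<^sup>2) / a) has_real_derivative (- a * x / sqrt (1 - (a * x)\<^sup>2))) (at x)"
proof -
  have pos: "0 < 1 - (a * x)\<^sup>2" using assms(2) by (simp add: abs_square_less_1)
  have "((\<lambda>x. sqrt (1 - (a * x)\<^sup>2) / a) has_real_derivative (- (a * a * x) / sqrt (1 - (a * x)\<^sup>2)) / a) (at x)"
    by (rule DERIV_cdivide[OF sq_deriv[OF pos]])
  moreover have "(- (a * a * x) / sqrt (1 - (a * x)\<^sup>2)) / a = - a * x / sqrt (1 - (a * x)\<^sup>2)"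
    using assms(1) by (simp add: field_simps)
  ultimately show ?thesis by simp
qed

lemma G_deriv:
  fixes a x :: real
  assumes "a \<noteq> 0" "\<bar>a * x\<bar> < 1"
  shows "((\<lambda>x. (x * sqrt (1 - (a * x)\<^sup>2) + arcsin (a * x) / a) / 2) has_real_derivative sqrt (1 - (a * x)\<^sup>2)) (at x)"
proof -
  have pos: "0 < 1 - (a * x)\<^sup>2" using assms(2) by (simp add: abs_square_less_1)
  have lt: "-1 < a * x" "a * x < 1" using assms(2) by auto
  have as: "((\<lambda>x. arcsin (a * x)) has_real_derivative (inverse (sqrt (1 - (a*x)\<^sup>2)) * a)) (at x)"
    by (rule DERIV_chain2[OF DERIV_arcsin[OF lt] DERIV_cmult_Id])
  have "((\<lambda>x. (x * sqrt (1 - (a * x)\<^sup>2) + arcsin (a * x) / a) / 2) has_real_derivative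
     ((1 * sqrt (1 - (a * x)\<^sup>2) + (- (a * a * x) / sqrt (1 - (a * x)\<^sup>2)) * x) + (inverse (sqrt (1 - (a*x)\<^sup>2)) * a) / a) / 2) (at x)"
    by (intro DERIV_cdivide DERIV_add DERIV_mult DERIV_ident sq_deriv[OF pos] as)
  moreover have e: "((1 * sqrt (1 - (a * x)\<^sup>2) + (- (a * a * x) / sqrt (1 - (a * x)\<^sup>2)) * x) + (inverse (sqrt (1 - (a*x)\<^sup>2)) * a) / a) / 2
       = sqrt (1 - (a * x)\<^sup>2)"
  proof -
    let ?s = "sqrt (1 - (a * x)\<^sup>2)"
    have s: "?s > 0" using pos by simp
    have ss: "?s * ?s = 1 - (a * x)\<^sup>2" using pos by (simp flip: power2_eq_square)
    have "((1 * ?s + (- (a * a * x) / ?s) * x) + (inverse ?s * a) / a) / 2 = (- (a * a * x * x) + ?s * ?s + 1) / (2 * ?s)"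
      using s assms(1) by (simp add: field_simps)
    also have "\<dots> = (2 * (?s * ?s)) / (2 * ?s)" using ss by (simp add: power2_eq_square algebra_simps)
    also have "\<dots> = ?s" using s pos by (simp add: field_simps)
    finally show ?thesis .
  qed
  ultimately show ?thesis by (metis (no_types, lifting))
qed

theorem mainTheorem4:
  fixes \<beta> A p :: real and w w' :: "real \<Rightarrow> real"
  assumes "0 < \<beta>" and "\<beta> < 1" and "A > 0" and "p > 0"
    and "W11_with_deriv w w' p"
    and "\<forall>x\<in>{-p..p}. w x \<ge> 0"
    and "w (-p) = 0" and "w p = 0"
    and "integral {-p..p} w = A"
  defines "L \<equiv> integral {-p..p} (\<lambda>x. sqrt (1 + (w' x)\<^sup>2))"
    and "c \<equiv> arccos \<beta> - \<beta> * sqrt (1 - \<beta>\<^sup>2)"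
  defines "p0 \<equiv> sqrt ((1 - \<beta>\<^sup>2) * A / c)"
    and "R \<equiv> sqrt (A / c)"
  shows "L - 2 * \<beta> * p \<ge> 2 * sqrt (A * c) \<and>
         (L - 2 * \<beta> * p = 2 * sqrt (A * c) \<longleftrightarrow>
            p = p0 \<and> (\<forall>x\<in>{-p..p}. w x = sqrt (R\<^sup>2 - x\<^sup>2) - \<beta> * R))"
proof -
  have W0: "w' absolutely_integrable_on {-p..p} \<and> (\<forall>x\<in>{-p..p}. w x = w (-p) + integral {-p..x} w')"
    using assms(5) unfolding W11_with_deriv_def .
  have W: "w' absolutely_integrable_on {-p..p}" "\<forall>x\<in>{-p..p}. w x = w (-p) + integral {-p..x} w'"
    using W0 by blast+
  note ai = W(1)
  have p: "p > 0" using assms(4) .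
  have wi0: "w x = integral {-p..x} w'" if "x \<in> {-p..p}" for x
    using W(2)[rule_format, OF that] assms(7) by simp
  have w'i: "w' integrable_on {-p..p}" using ai by (rule set_lebesgue_integral_eq_integral(1))
  have w'm[measurable]: "w' \<in> borel_measurable (lebesgue_on {-p..p})"
    using ai by (rule absolutely_integrable_imp_borel_measurable) simp
  have absw'i: "(\<lambda>x. \<bar>w' x\<bar>) integrable_on {-p..p}"
    using ai unfolding absolutely_integrable_on_def by simp
  have BPe: "integral {-p..p} (\<lambda>x. x * w' x) = - A"
    using byparts[OF ai p W(2)] assms(7,8,9) by simp
  define s where "s = sqrt (1 - \<beta>\<^sup>2)"
  define th where "th = arccos \<beta>"
  have b1: "\<beta>\<^sup>2 < 1" using assms(1,2) abs_square_less_1[of \<beta>] by auto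
  have s_pos: "0 < s" unfolding s_def using b1 by simp
  have s2: "s\<^sup>2 = 1 - \<beta>\<^sup>2" unfolding s_def using b1 by simp
  have s_lt: "s < 1"
  proof -
    have "s\<^sup>2 < 1" using s2 assms(1) by simp
    then show ?thesis using s_pos abs_square_less_1[of s] by auto
  qed
  have sinth: "sin th = s" unfolding th_def s_def using assms(1,2) by (simp add: sin_arccos)
  have th_ge: "0 \<le> th" unfolding th_def using assms(1,2) by (simp add: arccos_lbound)
  have arcs: "arcsin s = th" unfolding th_def s_def using assms(1,2) by (simp add: arccos_arcsin_sqrt_pos)
  have sq1s: "sqrt (1 - s\<^sup>2) = \<beta>" using s2 assms(1) by simp
  have c_eq: "c = th - \<beta> * s" unfolding c_def th_def s_def ..
  have c_pos: "c > 0"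
  proof -
    have h1: "s \<le> th" using sin_x_le_x[OF th_ge] unfolding sinth .
    have h2: "\<beta> * s < 1 * s" using mult_strict_right_mono[OF assms(2) s_pos] .
    show ?thesis using h1 h2 c_eq by linarith
  qed
  define a where "a = s / p"
  have a_pos: "a > 0" unfolding a_def using s_pos p by simp
  have ap: "a * p = s" unfolding a_def using p by simp
  have ax_lt: "\<bar>a * x\<bar> < 1" if "x \<in> {-p..p}" for x
  proof -
    have "\<bar>x\<bar> \<le> p" using that by auto
    then have "a * \<bar>x\<bar> \<le> a * p" using a_pos by (intro mult_left_mono) auto
    then show ?thesis using ap s_lt a_pos by (simp add: abs_mult)
  qed
  have pos1: "0 < 1 - (a * x)\<^sup>2" if "x \<in> {-p..p}" for x
    using ax_lt[OF that] abs_square_less_1[of "a*x"] by simp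
  define \<Phi> where "\<Phi> x = sqrt (1 - (a * x)\<^sup>2) / a" for x
  define \<phi> where "\<phi> x = - a * x / sqrt (1 - (a * x)\<^sup>2)" for x
  define G where "G x = (x * sqrt (1 - (a * x)\<^sup>2) + arcsin (a * x) / a) / 2" for x
  have \<Phi>_int: "(\<phi> has_integral (\<Phi> y - \<Phi> (-p))) {-p..y}" if y: "y \<in> {-p..p}" for y
  proof (rule fundamental_theorem_of_calculus)
    show "-p \<le> y" using y by simp
    fix x assume x: "x \<in> {-p..y}"
    then have "x \<in> {-p..p}" using y by auto
    then have "(\<Phi> has_real_derivative \<phi> x) (at x)"
      unfolding \<Phi>_def \<phi>_def using Phi_deriv[of a x] a_pos ax_lt by auto
    then show "(\<Phi> has_vector_derivative \<phi> x) (at x within {-p..y})"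
      using has_vector_derivative_at_within has_real_derivative_iff_has_vector_derivative by blast
  qed
  have G_int: "((\<lambda>x. sqrt (1 - (a * x)\<^sup>2)) has_integral (G p - G (-p))) {-p..p}"
  proof (rule fundamental_theorem_of_calculus)
    show "-p \<le> p" using p by simp
    fix x assume x: "x \<in> {-p..p}"
    then have "(G has_real_derivative sqrt (1 - (a * x)\<^sup>2)) (at x)"
      unfolding G_def using G_deriv[of a x] a_pos ax_lt by auto
    then show "(G has_vector_derivative sqrt (1 - (a * x)\<^sup>2)) (at x within {-p..p})"
      using has_vector_derivative_at_within has_real_derivative_iff_has_vector_derivative by blast
  qed
  have Gval: "G p - G (-p) = p * \<beta> + th / a"
  proof -
    have e1: "(a * p)\<^sup>2 = s\<^sup>2" "(a * - p)\<^sup>2 = s\<^sup>2" using ap by (simp_all add: power2_eq_square)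
    have e2: "arcsin (a * - p) = - th" using ap arcsin_minus[of s] s_pos s_lt arcs by simp
    show ?thesis unfolding G_def using e1 e2 ap arcs sq1s by (simp add: field_simps)
  qed
  have sqrt_i: "(\<lambda>x. sqrt (1 - (a * x)\<^sup>2)) integrable_on {-p..p}" using G_int by blast
  have I_val: "integral {-p..p} (\<lambda>x. sqrt (1 - (a * x)\<^sup>2)) = p * \<beta> + th / a"
    using integral_unique[OF G_int] Gval by simp
  have xw'ai: "(\<lambda>x. x * w' x) absolutely_integrable_on {-p..p}"
  proof (rule measurable_bounded_by_integrable_imp_absolutely_integrable)
    show "(\<lambda>x. x * w' x) \<in> borel_measurable (lebesgue_on {-p..p})"
      by measurable
    show "(\<lambda>x. p * \<bar>w' x\<bar>) integrable_on {-p..p}"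
      using integrable_on_cmult_left[OF absw'i, of p] by simp
    show "norm (x * w' x) \<le> p * \<bar>w' x\<bar>" if "x \<in> {-p..p}" for x
    proof -
      have "\<bar>x\<bar> \<le> p" using that by auto
      then have "\<bar>x\<bar> * \<bar>w' x\<bar> \<le> p * \<bar>w' x\<bar>" by (rule mult_right_mono) simp
      then show ?thesis by (simp add: abs_mult)
    qed
  qed simp
  have xw'i: "(\<lambda>x. x * w' x) integrable_on {-p..p}"
    using xw'ai by (rule set_lebesgue_integral_eq_integral(1))
  have L1ai: "(\<lambda>x. sqrt (1 + (w' x)\<^sup>2)) absolutely_integrable_on {-p..p}"
  proof (rule measurable_bounded_by_integrable_imp_absolutely_integrable)
    show "(\<lambda>x. sqrt (1 + (w' x)\<^sup>2)) \<in> borel_measurable (lebesgue_on {-p..p})"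
      by measurable
    show "(\<lambda>x. 1 + \<bar>w' x\<bar>) integrable_on {-p..p}"
      using integrable_add[OF integrable_const_ivl[of 1 "-p" p] absw'i] by simp
    show "norm (sqrt (1 + (w' x)\<^sup>2)) \<le> 1 + \<bar>w' x\<bar>" for x
    proof -
      have "1 + (w' x)\<^sup>2 \<le> (1 + \<bar>w' x\<bar>)\<^sup>2" by (simp add: power2_eq_square algebra_simps)
      then have "sqrt (1 + (w' x)\<^sup>2) \<le> 1 + \<bar>w' x\<bar>" by (intro real_le_lsqrt) auto
      then show ?thesis by simp
    qed
  qed simp
  have L1i: "(\<lambda>x. sqrt (1 + (w' x)\<^sup>2)) integrable_on {-p..p}"
    using L1ai by (rule set_lebesgue_integral_eq_integral(1))
  define low where "low x = - a * (x * w' x) + sqrt (1 - (a * x)\<^sup>2)" for x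
  have xw'c: "(\<lambda>x. - a * (x * w' x)) integrable_on {-p..p}"
    using integrable_on_cmult_left[OF xw'i, of "-a"] by simp
  have low_i: "low integrable_on {-p..p}"
    unfolding low_def by (intro integrable_add xw'c sqrt_i)
  have low_int: "integral {-p..p} low = a * A + (p * \<beta> + th / a)"
  proof -
    have "integral {-p..p} low = integral {-p..p} (\<lambda>x. - a * (x * w' x)) + integral {-p..p} (\<lambda>x. sqrt (1 - (a * x)\<^sup>2))"
      unfolding low_def by (intro integral_add xw'c sqrt_i)
    also have "\<dots> = a * A + (p * \<beta> + th / a)" using BPe I_val by simp
    finally show ?thesis .
  qed
  have low_le: "low x \<le> sqrt (1 + (w' x)\<^sup>2)" if "x \<in> {-p..p}" for x
  proof -
    have "(a * x)\<^sup>2 + (sqrt (1 - (a * x)\<^sup>2))\<^sup>2 = 1" using pos1[OF that] by simp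
    from pw_ineq[OF this, of "w' x"] show ?thesis unfolding low_def by (simp add: algebra_simps)
  qed
  have low_eq: "sqrt (1 + (w' x)\<^sup>2) = low x \<longleftrightarrow> w' x = \<phi> x" if "x \<in> {-p..p}" for x
  proof -
    have "(a * x)\<^sup>2 + (sqrt (1 - (a * x)\<^sup>2))\<^sup>2 = 1" using pos1[OF that] by simp
    from pw_eq[OF this, of "w' x"] pos1[OF that] show ?thesis unfolding low_def \<phi>_def by (simp add: algebra_simps)
  qed
  define D where "D x = sqrt (1 + (w' x)\<^sup>2) - low x" for x
  have D_i: "D integrable_on {-p..p}" unfolding D_def by (intro integrable_diff L1i low_i)
  have D_nn: "0 \<le> D x" if "x \<in> {-p..p}" for x using low_le[OF that] by (simp add: D_def)
  have D_int: "integral {-p..p} D = L - (a * A + (p * \<beta> + th / a))"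
    unfolding D_def L_def using integral_diff[OF L1i low_i] low_int by simp
  define X where "X = s * A / p"
  define Y where "Y = p * c / s"
  have X_pos: "X > 0" unfolding X_def using s_pos assms(3) p by simp
  have Y_pos: "Y > 0" unfolding Y_def using s_pos c_pos p by simp
  have XY: "X * Y = A * c" unfolding X_def Y_def using s_pos p by (simp add: field_simps)
  have sum: "a * A + (p * \<beta> + th / a) - 2 * \<beta> * p = X + Y"
    unfolding X_def Y_def a_def c_eq using s_pos p by (simp add: field_simps)
  have sqXY: "X + Y - 2 * sqrt (A * c) = (sqrt X - sqrt Y)\<^sup>2"
  proof -
    have "(sqrt X - sqrt Y)\<^sup>2 = (sqrt X)\<^sup>2 + (sqrt Y)\<^sup>2 - 2 * (sqrt X * sqrt Y)"
      by (simp add: power2_eq_square algebra_simps)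
    also have "\<dots> = X + Y - 2 * sqrt (A * c)"
      using X_pos Y_pos XY by (simp flip: real_sqrt_mult)
    finally show ?thesis by simp
  qed
  have key: "L - 2 * \<beta> * p - 2 * sqrt (A * c) = integral {-p..p} D + (sqrt X - sqrt Y)\<^sup>2"
    using D_int sum sqXY by simp
  have D_int_nn: "0 \<le> integral {-p..p} D" using D_i D_nn by (intro integral_nonneg) auto
  have part1: "L - 2 * \<beta> * p \<ge> 2 * sqrt (A * c)"
    using key D_int_nn zero_le_power2[of "sqrt X - sqrt Y"] by linarith
  have iffX: "sqrt X = sqrt Y \<longleftrightarrow> p = p0"
  proof -
    have "sqrt X = sqrt Y \<longleftrightarrow> X = Y" by simp
    also have "\<dots> \<longleftrightarrow> p\<^sup>2 = s\<^sup>2 * A / c"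
      unfolding X_def Y_def using s_pos p c_pos by (auto simp: field_simps power2_eq_square)
    also have "\<dots> \<longleftrightarrow> p = p0"
    proof
      assume h: "p\<^sup>2 = s\<^sup>2 * A / c"
      have "p0 = sqrt (p\<^sup>2)" unfolding p0_def h s2 ..
      then show "p = p0" using p by simp
    next
      assume h: "p = p0"
      have "p\<^sup>2 = (1 - \<beta>\<^sup>2) * A / c" unfolding h p0_def using b1 assms(3) c_pos by simp
      then show "p\<^sup>2 = s\<^sup>2 * A / c" using s2 by simp
    qed
    finally show ?thesis .
  qed
  have iffD: "integral {-p..p} D = 0 \<longleftrightarrow> (\<forall>x\<in>{-p..p}. w x = \<Phi> x - \<Phi> (-p))"
  proof
    assume D0: "integral {-p..p} D = 0"
    have part: "integral {-p..y} D = 0" if "y \<in> {-p..p}" for y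
      using nonneg_int0_partial[OF D_i D_nn D0 that] .
    obtain N where N: "negligible N" and DN: "\<And>x. x \<in> {-p..p} \<Longrightarrow> x \<notin> N \<Longrightarrow> D x = 0"
      using intervals_zero_ae[OF D_i part] by blast
    have w'\<phi>: "\<phi> x = w' x" if "x \<in> {-p..p}" "x \<notin> N" for x
      using DN[OF that] low_eq[OF that(1)] by (simp add: D_def)
    show "\<forall>x\<in>{-p..p}. w x = \<Phi> x - \<Phi> (-p)"
    proof
      fix y assume y: "y \<in> {-p..p}"
      have "w y = integral {-p..y} w'" using wi0[OF y] .
      also have "\<dots> = integral {-p..y} \<phi>"
        using y by (intro integral_spike[OF N]) (auto intro!: w'\<phi>)
      also have "\<dots> = \<Phi> y - \<Phi> (-p)" using integral_unique[OF \<Phi>_int[OF y]] .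
      finally show "w y = \<Phi> y - \<Phi> (-p)" .
    qed
  next
    assume P: "\<forall>x\<in>{-p..p}. w x = \<Phi> x - \<Phi> (-p)"
    define h where "h x = w' x - \<phi> x" for x
    have \<phi>i: "\<phi> integrable_on {-p..p}" using \<Phi>_int[of p] p by auto
    have hi: "h integrable_on {-p..p}" unfolding h_def by (intro integrable_diff w'i \<phi>i)
    have hz: "integral {-p..y} h = 0" if y: "y \<in> {-p..p}" for y
    proof -
      have w'y: "w' integrable_on {-p..y}" by (rule integrable_on_subinterval[OF w'i]) (use y in auto)
      have "integral {-p..y} h = integral {-p..y} w' - integral {-p..y} \<phi>"
        unfolding h_def using integral_diff[OF w'y has_integral_integrable[OF \<Phi>_int[OF y]]] .
      also have "\<dots> = w y - (\<Phi> y - \<Phi> (-p))"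
        using wi0[OF y] integral_unique[OF \<Phi>_int[OF y]] by simp
      also have "\<dots> = 0" using P y by simp
      finally show ?thesis .
    qed
    obtain N where N: "negligible N" and hN: "\<And>x. x \<in> {-p..p} \<Longrightarrow> x \<notin> N \<Longrightarrow> h x = 0"
      using intervals_zero_ae[OF hi hz] by blast
    have "integral {-p..p} D = integral {-p..p} (\<lambda>_. 0::real)"
    proof (rule integral_spike[OF N])
      fix x assume x: "x \<in> {-p..p} - N"
      then have "w' x = \<phi> x" using hN[of x] by (auto simp: h_def)
      then show "0 = D x" using low_eq[of x] x by (simp add: D_def)
    qed
    then show "integral {-p..p} D = 0" by simp
  qed
  have arcR: "\<Phi> x - \<Phi> (-p) = sqrt (R\<^sup>2 - x\<^sup>2) - \<beta> * R" if pp: "p = p0" for x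
  proof -
    have R_pos: "R > 0" unfolding R_def using assms(3) c_pos by simp
    have "p0 = s * R"
    proof -
      have "p0 = sqrt (s\<^sup>2 * (A / c))" unfolding p0_def using s2 by simp
      also have "\<dots> = sqrt (s\<^sup>2) * sqrt (A / c)" by (rule real_sqrt_mult)
      also have "\<dots> = s * R" unfolding R_def using s_pos by simp
      finally show ?thesis .
    qed
    then have aR: "a = 1 / R" unfolding a_def pp using s_pos R_pos by simp
    have "\<Phi> x = sqrt (R\<^sup>2 - x\<^sup>2)" for x
    proof -
      have "\<Phi> x = sqrt (1 - (x / R)\<^sup>2) * sqrt (R\<^sup>2)" unfolding \<Phi>_def aR using R_pos by simp
      also have "\<dots> = sqrt ((1 - (x / R)\<^sup>2) * R\<^sup>2)" by (simp add: real_sqrt_mult)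
      also have "(1 - (x / R)\<^sup>2) * R\<^sup>2 = R\<^sup>2 - x\<^sup>2" using R_pos by (simp add: field_simps)
      finally show ?thesis .
    qed
    moreover have "\<Phi> (-p) = \<beta> * R" unfolding \<Phi>_def aR
    proof -
      have "(1 / R * - p)\<^sup>2 = s\<^sup>2" using ap aR by (simp add: power2_eq_square)
      then show "sqrt (1 - (1 / R * - p)\<^sup>2) / (1 / R) = \<beta> * R" using sq1s by simp
    qed
    ultimately show ?thesis by simp
  qed
  have part2: "L - 2 * \<beta> * p = 2 * sqrt (A * c) \<longleftrightarrow>
            p = p0 \<and> (\<forall>x\<in>{-p..p}. w x = sqrt (R\<^sup>2 - x\<^sup>2) - \<beta> * R)"
  proof -
    have "L - 2 * \<beta> * p = 2 * sqrt (A * c) \<longleftrightarrow> integral {-p..p} D + (sqrt X - sqrt Y)\<^sup>2 = 0"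
      using key by linarith
    also have "\<dots> \<longleftrightarrow> integral {-p..p} D = 0 \<and> sqrt X = sqrt Y"
      using D_int_nn by (simp add: add_nonneg_eq_0_iff)
    also have "\<dots> \<longleftrightarrow> (\<forall>x\<in>{-p..p}. w x = \<Phi> x - \<Phi> (-p)) \<and> p = p0"
      using iffD iffX by simp
    also have "\<dots> \<longleftrightarrow> p = p0 \<and> (\<forall>x\<in>{-p..p}. w x = sqrt (R\<^sup>2 - x\<^sup>2) - \<beta> * R)"
      using arcR by auto
    finally show ?thesis .
  qed
  show ?thesis using part1 part2 by blast
qed

end
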